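(* Let $\boldsymbol{y},\boldsymbol{x}\in\mathbb{R}^n$ and let $\boldsymbol{Z}=[\boldsymbol{z}_1\ \cdots\ \boldsymbol{z}_{k_z}]$ be an $n\times k_z$ matrix of full column rank, with $\boldsymbol{x}^T\boldsymbol{P}_Z\boldsymbol{x}\neq0$, $\boldsymbol{z}_\ell^T\boldsymbol{x}\neq0$ and $\boldsymbol{z}_{\ell|\{-\ell\}}^T\boldsymbol{x}\neq 0$ for all $\ell$. Let $\hat{\boldsymbol{\pi}}=(\boldsymbol{Z}^T\boldsymbol{Z})^{-1}\boldsymbol{Z}^T\boldsymbol{x}$ and $w_\ell=\hat\pi_\ell\,\boldsymbol{z}_\ell^T\boldsymbol{x}\,(\boldsymbol{x}^T\boldsymbol{P}_Z\boldsymbol{x})^{-1}$. Then $\sum_{\ell=1}^{k_z}w_\ell=1$ and $$\hat\beta_{2sls}=\sum_{\ell=1}^{k_z}w_\ell\hat\beta_\ell=\sum_{\ell=1}^{k_z}w_\ell\hat\beta^*_\ell .$$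
   Context: $\boldsymbol{P}_A=\boldsymbol{A}(\boldsymbol{A}^T\boldsymbol{A})^{-1}\boldsymbol{A}^T$, $\boldsymbol{M}_A=\boldsymbol{I}_n-\boldsymbol{P}_A$. $\hat\beta_{2sls}=(\boldsymbol{x}^T\boldsymbol{P}_Z\boldsymbol{x})^{-1}\boldsymbol{x}^T\boldsymbol{P}_Z\boldsymbol{y}$. $\boldsymbol{Z}_{\{-\ell\}}$ is $\boldsymbol{Z}$ with column $\boldsymbol{z}_\ell$ removed, $\boldsymbol{z}_{\ell|\{-\ell\}}=\boldsymbol{M}_{Z_{\{-\ell\}}}\boldsymbol{z}_\ell$, $\hat\beta_\ell=\boldsymbol{z}_{\ell|\{-\ell\}}^T\boldsymbol{y}/\boldsymbol{z}_{\ell|\{-\ell\}}^T\boldsymbol{x}$ (the just-identified IV estimator with $\boldsymbol{z}_\ell$ as instrument and the other instruments as controls), and $\hat\beta^*_\ell=\boldsymbol{z}_\ell^T\boldsymbol{y}/\boldsymbol{z}_\ell^T\boldsymbol{x}$ (the just-identified IV estimator with $\boldsymbol{z}_\ell$ as sole instrument and the others omitted). *)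

theory Defs
  imports "Jordan_Normal_Form.DL_Rank" "Jordan_Normal_Form.Gauss_Jordan_Elimination"
begin

definition minv :: "real mat \<Rightarrow> real mat" where
  "minv A = (case mat_inverse A of Some B \<Rightarrow> B | None \<Rightarrow> 0\<^sub>m (dim_row A) (dim_col A))"

definition proj_mat :: "real mat \<Rightarrow> real mat" where
  "proj_mat A = A * minv (A\<^sup>T * A) * A\<^sup>T"

definition annih_mat :: "real mat \<Rightarrow> real mat" where
  "annih_mat A = 1\<^sub>m (dim_row A) - proj_mat A"

text \<open>Z_{-l}: Z with column l (0-based) removed\<close>
definition drop_col :: "real mat \<Rightarrow> nat \<Rightarrow> real mat" where
  "drop_col A l = mat_of_cols (dim_row A) [col A j. j \<leftarrow> [0..<dim_col A], j \<noteq> l]"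

definition z_part :: "real mat \<Rightarrow> nat \<Rightarrow> real vec" where
  "z_part Z l = annih_mat (drop_col Z l) *\<^sub>v col Z l"

definition beta_2sls :: "real mat \<Rightarrow> real vec \<Rightarrow> real vec \<Rightarrow> real" where
  "beta_2sls Z x y = (x \<bullet> (proj_mat Z *\<^sub>v y)) / (x \<bullet> (proj_mat Z *\<^sub>v x))"

definition beta_l :: "real mat \<Rightarrow> real vec \<Rightarrow> real vec \<Rightarrow> nat \<Rightarrow> real" where
  "beta_l Z x y l = (z_part Z l \<bullet> y) / (z_part Z l \<bullet> x)"

definition beta_star :: "real mat \<Rightarrow> real vec \<Rightarrow> real vec \<Rightarrow> nat \<Rightarrow> real" where
  "beta_star Z x y l = (col Z l \<bullet> y) / (col Z l \<bullet> x)"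

definition pi_hat :: "real mat \<Rightarrow> real vec \<Rightarrow> real vec" where
  "pi_hat Z x = minv (Z\<^sup>T * Z) *\<^sub>v (Z\<^sup>T *\<^sub>v x)"

definition weight :: "real mat \<Rightarrow> real vec \<Rightarrow> nat \<Rightarrow> real" where
  "weight Z x l = (pi_hat Z x $ l) * (col Z l \<bullet> x) / (x \<bullet> (proj_mat Z *\<^sub>v x))"

end

theory Submission imports Defs begin

lemma self_sp_zero:
  fixes v :: "real vec"
  assumes v: "v \<in> carrier_vec m" and z: "v \<bullet> v = 0"
  shows "v = 0\<^sub>v m"
proof -
  have "(\<Sum>i\<in>{0..<m}. v $ i * v $ i) = 0" using z v unfolding scalar_prod_def by auto
  then have "\<forall>i\<in>{0..<m}. v $ i * v $ i = 0"
    by (subst sum_nonneg_eq_0_iff[symmetric]) auto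
  then show ?thesis using v by (intro eq_vecI) auto
qed

lemma (in vec_space) non_distinct_low_rank_gen:
assumes "A \<in> carrier_mat n nc"
and "\<not> distinct (cols A)"
shows "rank A < nc"
proof -
  obtain S where "maximal S (\<lambda>T. T \<subseteq> set (cols A) \<and> lin_indpt T)"
    using maximal_exists[of "(\<lambda>T. T \<subseteq> set (cols A) \<and> lin_indpt T)" "card (set (cols A))" "{}"]
    by (meson List.finite_set card_mono empty_iff empty_subsetI finite_lin_indpt2 rev_finite_subset)
  then have "card S \<le> card (set (cols A))" by (simp add: card_mono maximal_def)
  then have "card S < nc"
    using assms(1) cols_length card_length \<open>\<not> distinct (cols A)\<close> card_distinct carrier_matD(2) nat_less_le
    by (metis dual_order.antisym dual_order.trans)
  then show ?thesis
    using rank_card_indpt[OF \<open>A \<in> carrier_mat n nc\<close> \<open>maximal S (\<lambda>T. T \<subseteq> set (cols A) \<and> lin_indpt T)\<close>]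
    by simp
qed

lemma full_rank_inj:
  fixes A :: "real mat"
  assumes A: "A \<in> carrier_mat n nc" and r: "vec_space.rank n A = nc"
    and v: "v \<in> carrier_vec nc" and z: "A *\<^sub>v v = 0\<^sub>v n"
  shows "v = 0\<^sub>v nc"
proof (rule ccontr)
  interpret V: vec_space "TYPE(real)" n .
  assume nz: "v \<noteq> 0\<^sub>v nc"
  show False
  proof (cases "distinct (cols A)")
    case True
    have "V.lin_dep (set (cols A))"
      using V.lin_depI[OF A v nz z True] .
    moreover have "\<not> V.lin_dep (set (cols A))"
      using V.full_rank_lin_indpt[OF A r True] .
    ultimately show False by blast
  next
    case False
    then show False using vec_space.non_distinct_low_rank_gen[OF A False] r by simp
  qed
qed

lemma ginv:
  fixes A :: "real mat"
  assumes A: "A \<in> carrier_mat n m"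
    and inj: "\<And>v. v \<in> carrier_vec m \<Longrightarrow> A *\<^sub>v v = 0\<^sub>v n \<Longrightarrow> v = 0\<^sub>v m"
  shows "minv (A\<^sup>T * A) \<in> carrier_mat m m \<and> minv (A\<^sup>T * A) * (A\<^sup>T * A) = 1\<^sub>m m
     \<and> (A\<^sup>T * A) * minv (A\<^sup>T * A) = 1\<^sub>m m \<and> (minv (A\<^sup>T * A))\<^sup>T = minv (A\<^sup>T * A)"
proof -
  define G where "G = A\<^sup>T * A"
  have G: "G \<in> carrier_mat m m" using A unfolding G_def by auto
  have GT: "G\<^sup>T = G" unfolding G_def using A by (simp add: transpose_mult[of _ m n])
  have "det G \<noteq> 0"
  proof
    assume "det G = 0"
    then obtain v where v: "v \<in> carrier_vec m" "v \<noteq> 0\<^sub>v m" "G *\<^sub>v v = 0\<^sub>v m"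
      using det_0_iff_vec_prod_zero_field[OF G] by blast
    have "(A *\<^sub>v v) \<bullet> (A *\<^sub>v v) = (A\<^sup>T *\<^sub>v (A *\<^sub>v v)) \<bullet> v"
      using transpose_vec_mult_scalar[OF A v(1), of "A *\<^sub>v v"] A v by auto
    also have "\<dots> = (G *\<^sub>v v) \<bullet> v" unfolding G_def using A v by auto
    also have "\<dots> = 0" using v by simp
    finally have "A *\<^sub>v v = 0\<^sub>v n" using self_sp_zero[of "A *\<^sub>v v" n] mult_mat_vec_carrier[OF A v(1)] by auto
    then show False using inj v by auto
  qed
  then have U: "G \<in> Units (ring_mat TYPE(real) m ())" using det_non_zero_imp_unit[OF G \<open>det G \<noteq> 0\<close>, of "()"] by simp
  then obtain B where B: "mat_inverse G = Some B"
    using mat_inverse(1)[OF G, of "()"] by (cases "mat_inverse G") auto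
  have BB: "G * B = 1\<^sub>m m" "B * G = 1\<^sub>m m" "B \<in> carrier_mat m m"
    using mat_inverse(2)[OF G B] by auto
  have mB: "minv G = B" unfolding minv_def B by simp
  have "B\<^sup>T * G = 1\<^sub>m m"
  proof -
    have "B\<^sup>T * G = B\<^sup>T * G\<^sup>T" using GT by simp
    also have "\<dots> = (G * B)\<^sup>T" using transpose_mult[OF G BB(3)] by simp
    finally show ?thesis using BB by simp
  qed
  then have "B\<^sup>T = B"
  proof -
    have "B\<^sup>T = B\<^sup>T * (G * B)" using BB by simp
    also have "\<dots> = (B\<^sup>T * G) * B" using BB G by (simp add: assoc_mult_mat[symmetric, of _ m m])
    also have "\<dots> = B" using \<open>B\<^sup>T * G = 1\<^sub>m m\<close> BB by simp
    finally show ?thesis .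
  qed
  then show ?thesis using BB mB unfolding G_def by simp
qed

definition sig :: "nat \<Rightarrow> nat \<Rightarrow> nat" where
  "sig l j = (if j < l then j else Suc j)"

definition sel :: "nat \<Rightarrow> nat \<Rightarrow> real mat" where
  "sel k l = mat k (k - 1) (\<lambda>(i,j). if i = sig l j then 1 else 0)"

lemma filter_upt_neq:
  assumes "l < k"
  shows "filter (\<lambda>j. j \<noteq> l) [0..<k] = [0..<l] @ [Suc l..<k]"
  using assms
proof (induction k)
  case 0
  then show ?case by simp
next
  case (Suc k)
  show ?case
  proof (cases "l < k")
    case True
    then show ?thesis using Suc by simp
  next
    case False
    then have "l = k" using Suc by simp
    then show ?thesis by (simp add: filter_id_conv)
  qed
qed

lemma nth_filter_upt_neq:
  assumes "l < k" "j < k - 1"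
  shows "filter (\<lambda>j. j \<noteq> l) [0..<k] ! j = sig l j"
  using assms unfolding filter_upt_neq[OF assms(1)] sig_def
  by (auto simp: nth_append)

lemma mult_unit_vec_col:
  fixes Z :: "real mat"
  assumes Z: "Z \<in> carrier_mat n k" and j: "j < k"
  shows "Z *\<^sub>v unit_vec k j = col Z j"
  using Z j by (intro eq_vecI) (auto simp: scalar_prod_right_unit[OF j])

lemma listcompr_filter: "[f j. j \<leftarrow> xs, P j] = map f (filter P xs)"
  by (induction xs) auto

lemma drop_col_sel:
  assumes Z: "Z \<in> carrier_mat n k" and l: "l < k"
  shows "drop_col Z l = Z * sel k l"
proof -
  have len: "length [col Z j. j \<leftarrow> [0..<dim_col Z], j \<noteq> l] = k - 1"
    using Z l by (simp add: listcompr_filter filter_upt_neq)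
  have len2: "length (filter (\<lambda>j. j \<noteq> l) [0..<k]) = k - 1"
    using l by (simp add: filter_upt_neq)
  have colsel: "col (sel k l) j = unit_vec k (sig l j)" if "j < k - 1" for j
    using that unfolding sel_def by (intro eq_vecI) (auto simp: unit_vec_def)
  have sigk: "sig l j < k" if "j < k - 1" for j using that l unfolding sig_def by auto
  show ?thesis
  proof (rule eq_matI)
    fix i j assume i: "i < dim_row (Z * sel k l)" and j: "j < dim_col (Z * sel k l)"
    then have i': "i < n" and j': "j < k - 1" using Z unfolding sel_def by auto
    have "drop_col Z l $$ (i, j) = [col Z j. j \<leftarrow> [0..<dim_col Z], j \<noteq> l] ! j $ i"
      unfolding drop_col_def using Z i' j' len by (simp add: mat_of_cols_index)
    also have "\<dots> = col Z (sig l j) $ i"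
      using Z j' len2 nth_filter_upt_neq[OF l j'] by (simp add: listcompr_filter)
    also have "\<dots> = (Z *\<^sub>v col (sel k l) j) $ i"
      using colsel[OF j'] mult_unit_vec_col[OF Z sigk[OF j']] by simp
    also have "\<dots> = col (Z * sel k l) j $ i"
      using Z j' by (subst col_mult2[of _ n k _ "k - 1"]) (auto simp: sel_def)
    also have "\<dots> = (Z * sel k l) $$ (i, j)" using i j by simp
    finally show "drop_col Z l $$ (i, j) = (Z * sel k l) $$ (i, j)" .
  qed (use Z l in \<open>auto simp: drop_col_def sel_def listcompr_filter filter_upt_neq\<close>)
qed

lemma sel_inj:
  assumes l: "l < k" and v: "v \<in> carrier_vec (k - 1)" and z: "sel k l *\<^sub>v v = 0\<^sub>v k"
  shows "v = 0\<^sub>v (k - 1)"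
proof (rule eq_vecI)
  fix j assume "j < dim_vec (0\<^sub>v (k - 1) :: real vec)"
  then have j: "j < k - 1" by simp
  have sk: "sig l j < k" using j l unfolding sig_def by auto
  have inj: "sig l a = sig l b \<longleftrightarrow> a = b" for a b unfolding sig_def by auto
  have "(sel k l *\<^sub>v v) $ sig l j = (\<Sum>m\<in>{0..<k-1}. (if sig l j = sig l m then 1 else 0) * v $ m)"
    using sk v unfolding sel_def by (simp add: scalar_prod_def)
  also have "\<dots> = (\<Sum>m\<in>{0..<k-1}. if m = j then v $ m else 0)"
    by (rule sum.cong) (auto simp: inj)
  also have "\<dots> = v $ j" using j by simp
  finally show "v $ j = 0\<^sub>v (k - 1) $ j" using z sk j by simp
qed (use v in auto)

lemma fwl:
  fixes Z :: "real mat"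
  assumes Z: "Z \<in> carrier_mat n k" and l: "l < k"
    and inj: "\<And>v. v \<in> carrier_vec k \<Longrightarrow> Z *\<^sub>v v = 0\<^sub>v n \<Longrightarrow> v = 0\<^sub>v k"
    and v: "v \<in> carrier_vec n"
  shows "z_part Z l \<bullet> v = (minv (Z\<^sup>T * Z) *\<^sub>v (Z\<^sup>T *\<^sub>v v)) $ l * (col Z l \<bullet> z_part Z l)"
proof -
  define S where "S = sel k l"
  have S: "S \<in> carrier_mat k (k-1)" unfolding S_def sel_def by auto
  define A where "A = drop_col Z l"
  have AZS: "A = Z * S" using drop_col_sel[OF Z l] unfolding A_def S_def .
  have A: "A \<in> carrier_mat n (k-1)" using AZS Z S by auto
  have injA: "w = 0\<^sub>v (k-1)" if w: "w \<in> carrier_vec (k-1)" "A *\<^sub>v w = 0\<^sub>v n" for w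
  proof -
    have "Z *\<^sub>v (S *\<^sub>v w) = 0\<^sub>v n" using w AZS Z S by simp
    then have "S *\<^sub>v w = 0\<^sub>v k" using inj S w by auto
    then show ?thesis using sel_inj[OF l w(1)] S_def by simp
  qed
  define Ai where "Ai = minv (A\<^sup>T * A)"
  have Ai: "Ai \<in> carrier_mat (k-1) (k-1)" "Ai * (A\<^sup>T * A) = 1\<^sub>m (k-1)" "Ai\<^sup>T = Ai"
    using ginv[OF A injA] unfolding Ai_def by auto
  have AT: "A\<^sup>T \<in> carrier_mat (k-1) n" using A by auto
  define P where "P = A * Ai * A\<^sup>T"
  have P: "P \<in> carrier_mat n n" unfolding P_def using A Ai by auto
  have PT: "P\<^sup>T = P"
  proof -
    have "P\<^sup>T = (A\<^sup>T)\<^sup>T * (A * Ai)\<^sup>T" unfolding P_def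
      using transpose_mult[of "A * Ai" n "k-1" "A\<^sup>T" n] A Ai by auto
    also have "\<dots> = A * (Ai\<^sup>T * A\<^sup>T)" using transpose_mult[OF A Ai(1)] by simp
    also have "\<dots> = P" unfolding P_def using Ai A by (simp add: assoc_mult_mat[OF A Ai(1) AT])
    finally show ?thesis .
  qed
  have PA: "P * A = A"
  proof -
    have AiAT: "Ai * A\<^sup>T \<in> carrier_mat (k-1) n" using Ai(1) AT by auto
    have "P * A = A * (Ai * A\<^sup>T) * A" using A Ai(1) AT by (simp add: P_def)
    also have "\<dots> = A * ((Ai * A\<^sup>T) * A)" using assoc_mult_mat[OF A AiAT A] .
    also have "(Ai * A\<^sup>T) * A = Ai * (A\<^sup>T * A)" using assoc_mult_mat[OF Ai(1) AT A] .
    finally have "P * A = A * (Ai * (A\<^sup>T * A))" .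
    then show ?thesis using Ai A by simp
  qed
  define M where "M = 1\<^sub>m n - P"
  have M: "M \<in> carrier_mat n n" unfolding M_def using P by auto
  have dA: "dim_row (drop_col Z l) = n" using A A_def by auto
  have zp: "z_part Z l = M *\<^sub>v col Z l"
    unfolding z_part_def annih_mat_def proj_mat_def M_def P_def A_def Ai_def dA ..
  have MT: "M\<^sup>T = M" unfolding M_def using transpose_minus[of "1\<^sub>m n" n n P] P PT by simp
  have MA: "M * A = 0\<^sub>m n (k-1)"
  proof -
    have "M * A = 1\<^sub>m n * A - P * A" unfolding M_def
      using minus_mult_distrib_mat[of "1\<^sub>m n" n n P A "k-1"] P A by auto
    then show ?thesis using PA A by simp
  qed
  have Mcol: "M *\<^sub>v col Z j = 0\<^sub>v n" if j: "j < k" "j \<noteq> l" for j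
  proof -
    define j' where "j' = (if j < l then j else j - 1)"
    have j': "j' < k - 1" "sig l j' = j" using j l unfolding j'_def sig_def by auto
    have "col S j' = unit_vec k j"
      using j' unfolding S_def sel_def by (intro eq_vecI) (auto simp: unit_vec_def)
    then have "col A j' = col Z j"
      using AZS col_mult2[OF Z S j'(1)] mult_unit_vec_col[OF Z j(1)] by simp
    then have "M *\<^sub>v col Z j = col (M * A) j'" using col_mult2[OF M A j'(1)] by simp
    then show ?thesis using MA j' by simp
  qed
  define u where "u = M *\<^sub>v col Z l"
  have u: "u \<in> carrier_vec n" unfolding u_def using M Z l by auto
  have MZ: "M * Z = mat n k (\<lambda>(i,j). if j = l then u $ i else 0)"
  proof (rule eq_matI)
    fix i j assume i: "i < dim_row (mat n k (\<lambda>(i,j). if j = l then u $ i else 0))"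
      and j: "j < dim_col (mat n k (\<lambda>(i,j). if j = l then u $ i else 0))"
    have "(M * Z) $$ (i,j) = col (M * Z) j $ i" using i j M Z by simp
    also have "\<dots> = (M *\<^sub>v col Z j) $ i" using col_mult2[OF M Z] j by simp
    also have "\<dots> = (if j = l then u $ i else 0)" using Mcol i j u_def by auto
    finally show "(M * Z) $$ (i,j) = mat n k (\<lambda>(i,j). if j = l then u $ i else 0) $$ (i,j)"
      using i j by simp
  qed (use M Z in auto)
  define Gi where "Gi = minv (Z\<^sup>T * Z)"
  have Gi: "Gi \<in> carrier_mat k k" "(Z\<^sup>T * Z) * Gi = 1\<^sub>m k"
    using ginv[OF Z inj] unfolding Gi_def by auto
  define g where "g = Gi *\<^sub>v (Z\<^sup>T *\<^sub>v v)"
  have g: "g \<in> carrier_vec k" unfolding g_def using Gi Z v by auto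
  have ZT: "Z\<^sup>T \<in> carrier_mat k n" using Z by auto
  define r where "r = v - Z *\<^sub>v g"
  have r: "r \<in> carrier_vec n" unfolding r_def using v Z g by auto
  have ZTr: "Z\<^sup>T *\<^sub>v r = 0\<^sub>v k"
  proof -
    have "Z\<^sup>T *\<^sub>v r = Z\<^sup>T *\<^sub>v v - Z\<^sup>T *\<^sub>v (Z *\<^sub>v g)"
      unfolding r_def using mult_minus_distrib_mat_vec[OF ZT v, of "Z *\<^sub>v g"] Z g by auto
    also have "Z\<^sup>T *\<^sub>v (Z *\<^sub>v g) = Z\<^sup>T *\<^sub>v v"
    proof -
      have w: "Z\<^sup>T *\<^sub>v v \<in> carrier_vec k" using ZT v by auto
      have ZTZ: "Z\<^sup>T * Z \<in> carrier_mat k k" using Z by auto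
      have "Z\<^sup>T *\<^sub>v (Z *\<^sub>v g) = (Z\<^sup>T * Z) *\<^sub>v g"
        using assoc_mult_mat_vec[OF ZT Z g] by simp
      also have "\<dots> = ((Z\<^sup>T * Z) * Gi) *\<^sub>v (Z\<^sup>T *\<^sub>v v)"
        unfolding g_def using assoc_mult_mat_vec[OF ZTZ Gi(1) w] by simp
      also have "\<dots> = Z\<^sup>T *\<^sub>v v" unfolding Gi(2) using w by simp
      finally show ?thesis .
    qed
    finally show ?thesis using Z v by simp
  qed
  define t where "t = unit_vec k l - S *\<^sub>v (Ai *\<^sub>v (A\<^sup>T *\<^sub>v col Z l))"
  have t: "t \<in> carrier_vec k" unfolding t_def using S Ai A Z by auto
  have ut: "u = Z *\<^sub>v t"
  proof -
    have cz: "col Z l \<in> carrier_vec n" using Z l by auto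
    have "u = col Z l - P *\<^sub>v col Z l"
      unfolding u_def M_def using minus_mult_distrib_mat_vec[of "1\<^sub>m n" n n P "col Z l"] P cz by simp
    also have "P *\<^sub>v col Z l = Z *\<^sub>v (S *\<^sub>v (Ai *\<^sub>v (A\<^sup>T *\<^sub>v col Z l)))"
    proof -
      have AAi: "A * Ai \<in> carrier_mat n (k-1)" using A Ai(1) by auto
      have w1: "A\<^sup>T *\<^sub>v col Z l \<in> carrier_vec (k-1)" using AT cz by auto
      have w2: "Ai *\<^sub>v (A\<^sup>T *\<^sub>v col Z l) \<in> carrier_vec (k-1)" using Ai(1) w1 by auto
      have "P *\<^sub>v col Z l = (A * Ai) *\<^sub>v (A\<^sup>T *\<^sub>v col Z l)"
        unfolding P_def using assoc_mult_mat_vec[OF AAi AT cz] .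
      also have "\<dots> = A *\<^sub>v (Ai *\<^sub>v (A\<^sup>T *\<^sub>v col Z l))"
        using assoc_mult_mat_vec[OF A Ai(1) w1] .
      also have "\<dots> = Z *\<^sub>v (S *\<^sub>v (Ai *\<^sub>v (A\<^sup>T *\<^sub>v col Z l)))"
        unfolding AZS using assoc_mult_mat_vec[OF Z S w2[unfolded AZS]] .
      finally show ?thesis .
    qed
    finally have ue: "u = col Z l - Z *\<^sub>v (S *\<^sub>v (Ai *\<^sub>v (A\<^sup>T *\<^sub>v col Z l)))" .
    have wc: "S *\<^sub>v (Ai *\<^sub>v (A\<^sup>T *\<^sub>v col Z l)) \<in> carrier_vec k" using S Ai(1) AT cz by auto
    have "Z *\<^sub>v t = Z *\<^sub>v unit_vec k l - Z *\<^sub>v (S *\<^sub>v (Ai *\<^sub>v (A\<^sup>T *\<^sub>v col Z l)))"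
      unfolding t_def using mult_minus_distrib_mat_vec[OF Z unit_vec_carrier wc] .
    then show ?thesis using ue mult_unit_vec_col[OF Z l] by simp
  qed
  have ur: "u \<bullet> r = 0"
  proof -
    have "u \<bullet> r = r \<bullet> (Z *\<^sub>v t)" using ut comm_scalar_prod[OF _ r, of u] u by simp
    also have "\<dots> = (Z\<^sup>T *\<^sub>v r) \<bullet> t" using transpose_vec_mult_scalar[OF Z t r] by simp
    finally show ?thesis using ZTr t by simp
  qed
  have cz: "col Z l \<in> carrier_vec n" using Z l by auto
  have Zg: "Z *\<^sub>v g \<in> carrier_vec n" using Z g by auto
  have MZg: "M *\<^sub>v (Z *\<^sub>v g) = g $ l \<cdot>\<^sub>v u"
  proof -
    have "M *\<^sub>v (Z *\<^sub>v g) = (M * Z) *\<^sub>v g" using M Z g by simp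
    also have "\<dots> = g $ l \<cdot>\<^sub>v u"
    proof (rule eq_vecI)
      fix i assume "i < dim_vec (g $ l \<cdot>\<^sub>v u)"
      then have i: "i < n" using u by auto
      have "((M * Z) *\<^sub>v g) $ i = (\<Sum>j\<in>{0..<k}. (if j = l then u $ i else 0) * g $ j)"
        unfolding MZ using i g by (simp add: scalar_prod_def)
      also have "\<dots> = (\<Sum>j\<in>{0..<k}. if j = l then u $ i * g $ j else 0)"
        by (rule sum.cong) auto
      also have "\<dots> = u $ i * g $ l" using l by simp
      finally show "((M * Z) *\<^sub>v g) $ i = (g $ l \<cdot>\<^sub>v u) $ i" using i u by simp
    qed (use M Z u in auto)
    finally show ?thesis .
  qed
  have uZg: "u \<bullet> (Z *\<^sub>v g) = g $ l * (col Z l \<bullet> u)"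
  proof -
    have "u \<bullet> (Z *\<^sub>v g) = (M\<^sup>T *\<^sub>v col Z l) \<bullet> (Z *\<^sub>v g)" unfolding u_def MT ..
    also have "\<dots> = col Z l \<bullet> (M *\<^sub>v (Z *\<^sub>v g))" using transpose_vec_mult_scalar[OF M Zg cz] .
    also have "\<dots> = g $ l * (col Z l \<bullet> u)" unfolding MZg using cz u by simp
    finally show ?thesis .
  qed
  have "u \<bullet> r = u \<bullet> v - u \<bullet> (Z *\<^sub>v g)" unfolding r_def using scalar_prod_minus_distrib[OF u v Zg] .
  then have "u \<bullet> v = g $ l * (col Z l \<bullet> u)" using ur uZg by simp
  then show ?thesis unfolding zp u_def[symmetric] g_def Gi_def .
qed

theorem mainTheorem2:
  fixes n kz :: nat and Z :: "real mat" and x y :: "real vec"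
  assumes "Z \<in> carrier_mat n kz"
    and "x \<in> carrier_vec n" and "y \<in> carrier_vec n"
    and "vec_space.rank n Z = kz"
    and "x \<bullet> (proj_mat Z *\<^sub>v x) \<noteq> 0"
    and "\<And>l. l < kz \<Longrightarrow> col Z l \<bullet> x \<noteq> 0"
    and "\<And>l. l < kz \<Longrightarrow> z_part Z l \<bullet> x \<noteq> 0"
  shows "(\<Sum>l<kz. weight Z x l) = 1
    \<and> beta_2sls Z x y = (\<Sum>l<kz. weight Z x l * beta_l Z x y l)
    \<and> beta_2sls Z x y = (\<Sum>l<kz. weight Z x l * beta_star Z x y l)"
proof -
  note Z = assms(1) and x = assms(2) and y = assms(3)
  have inj: "\<And>v. v \<in> carrier_vec kz \<Longrightarrow> Z *\<^sub>v v = 0\<^sub>v n \<Longrightarrow> v = 0\<^sub>v kz"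
    using full_rank_inj[OF Z assms(4)] by blast
  define Gi where "Gi = minv (Z\<^sup>T * Z)"
  have Gi: "Gi \<in> carrier_mat kz kz" "Gi\<^sup>T = Gi"
    using ginv[OF Z inj] unfolding Gi_def by auto
  have ZT: "Z\<^sup>T \<in> carrier_mat kz n" using Z by auto
  define p where "p = (\<lambda>w. Gi *\<^sub>v (Z\<^sup>T *\<^sub>v w))"
  have p: "p w \<in> carrier_vec kz" if "w \<in> carrier_vec n" for w
    unfolding p_def using that Gi ZT by auto
  have ZTw: "Z\<^sup>T *\<^sub>v w \<in> carrier_vec kz" if "w \<in> carrier_vec n" for w
    using that ZT by auto
  have projw: "x \<bullet> (proj_mat Z *\<^sub>v w) = (Z\<^sup>T *\<^sub>v x) \<bullet> p w" if w: "w \<in> carrier_vec n" for w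
  proof -
    have ZGi: "Z * Gi \<in> carrier_mat n kz" using Z Gi by auto
    have "proj_mat Z *\<^sub>v w = (Z * Gi) *\<^sub>v (Z\<^sup>T *\<^sub>v w)"
      unfolding proj_mat_def Gi_def[symmetric] using assoc_mult_mat_vec[OF ZGi ZT w] .
    also have "\<dots> = Z *\<^sub>v p w" unfolding p_def using assoc_mult_mat_vec[OF Z Gi(1) ZTw[OF w]] .
    finally have "x \<bullet> (proj_mat Z *\<^sub>v w) = x \<bullet> (Z *\<^sub>v p w)" by simp
    also have "\<dots> = (Z\<^sup>T *\<^sub>v x) \<bullet> p w" using transpose_vec_mult_scalar[OF Z p[OF w] x] by simp
    finally show ?thesis .
  qed
  have ZTx_idx: "(Z\<^sup>T *\<^sub>v w) $ l = col Z l \<bullet> w" if "l < kz" for l w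
    using that Z by simp
  have sp: "a \<bullet> b = (\<Sum>l<kz. a $ l * b $ l)" if "b \<in> carrier_vec kz" for a b
    using that unfolding scalar_prod_def by (simp add: lessThan_atLeast0)
  define d where "d = x \<bullet> (proj_mat Z *\<^sub>v x)"
  have d0: "d \<noteq> 0" using assms(5) d_def by simp
  have dx: "d = (Z\<^sup>T *\<^sub>v x) \<bullet> p x" unfolding d_def using projw[OF x] .
  have w_def: "weight Z x l = p x $ l * (col Z l \<bullet> x) / d" for l
    unfolding weight_def pi_hat_def d_def p_def Gi_def ..
  have psym: "p x \<bullet> (Z\<^sup>T *\<^sub>v y) = (Z\<^sup>T *\<^sub>v x) \<bullet> p y"
  proof -
    have "p x \<bullet> (Z\<^sup>T *\<^sub>v y) = (Gi\<^sup>T *\<^sub>v (Z\<^sup>T *\<^sub>v x)) \<bullet> (Z\<^sup>T *\<^sub>v y)" unfolding p_def Gi(2) ..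
    also have "\<dots> = (Z\<^sup>T *\<^sub>v x) \<bullet> p y"
      unfolding p_def using transpose_vec_mult_scalar[OF Gi(1) ZTw[OF y] ZTw[OF x]] .
    finally show ?thesis .
  qed
  have b2: "beta_2sls Z x y = ((Z\<^sup>T *\<^sub>v x) \<bullet> p y) / d"
    unfolding beta_2sls_def d_def[symmetric] using projw[OF y] by simp
  have S1: "(\<Sum>l<kz. weight Z x l) = 1"
  proof -
    have "(\<Sum>l<kz. weight Z x l) = (\<Sum>l<kz. (Z\<^sup>T *\<^sub>v x) $ l * p x $ l) / d"
      unfolding w_def sum_divide_distrib by (rule sum.cong) (auto simp: ZTx_idx)
    also have "\<dots> = d / d" using sp[OF p[OF x]] dx by simp
    finally show ?thesis using d0 by simp
  qed
  have S3: "beta_2sls Z x y = (\<Sum>l<kz. weight Z x l * beta_star Z x y l)"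
  proof -
    have "(\<Sum>l<kz. weight Z x l * beta_star Z x y l) = (\<Sum>l<kz. p x $ l * (Z\<^sup>T *\<^sub>v y) $ l) / d"
      unfolding sum_divide_distrib
    proof (rule sum.cong)
      fix l assume "l \<in> {..<kz}"
      then have l: "l < kz" by simp
      have "col Z l \<bullet> x \<noteq> 0" using assms(6)[OF l] .
      then show "weight Z x l * beta_star Z x y l = p x $ l * (Z\<^sup>T *\<^sub>v y) $ l / d"
        unfolding w_def beta_star_def ZTx_idx[OF l] by (simp add: field_simps)
    qed simp
    also have "\<dots> = beta_2sls Z x y" using sp[OF ZTw[OF y]] psym b2 by simp
    finally show ?thesis by simp
  qed
  have S2: "beta_2sls Z x y = (\<Sum>l<kz. weight Z x l * beta_l Z x y l)"
  proof -
    have "(\<Sum>l<kz. weight Z x l * beta_l Z x y l) = (\<Sum>l<kz. (Z\<^sup>T *\<^sub>v x) $ l * p y $ l) / d"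
      unfolding sum_divide_distrib
    proof (rule sum.cong)
      fix l assume "l \<in> {..<kz}"
      then have l: "l < kz" by simp
      define c where "c = col Z l \<bullet> z_part Z l"
      have fx: "z_part Z l \<bullet> x = p x $ l * c"
        unfolding c_def p_def Gi_def using fwl[OF Z l inj x] .
      have fy: "z_part Z l \<bullet> y = p y $ l * c"
        unfolding c_def p_def Gi_def using fwl[OF Z l inj y] .
      have nz: "p x $ l * c \<noteq> 0" using assms(7)[OF l] fx by simp
      then show "weight Z x l * beta_l Z x y l = (Z\<^sup>T *\<^sub>v x) $ l * p y $ l / d"
        unfolding w_def beta_l_def fx fy ZTx_idx[OF l] by (simp add: field_simps)
    qed simp
    also have "\<dots> = beta_2sls Z x y" using sp[OF p[OF y]] b2 by simp
    finally show ?thesis by simp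
  qed
  show ?thesis using S1 S2 S3 by blast
qed

end
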